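(* Let $\mathcal C$ be a concept hierarchy, $r_1,r_2,\epsilon\in[0,1]$ with $r_1\le r_2(1-\epsilon)$, $m$ a positive integer, and let $\mathcal A_2$ and $\mathcal H$ be the networks defined below (with $\mathcal H$ having a fixed failed set $F$ satisfying the stated constraint). Then $\mathcal H$ $implements_2$ $\mathcal A_2$: for every $B\subseteq C_0$, in the executions of $\mathcal A_2$ and $\mathcal H$ on input $B$, for every concept $c$, if $rep(c)$ does not fire at time $level(c)$ in $\mathcal A_2$, then no neuron in $reps(c)$ fires at time $level(c)$ in $\mathcal H$.
   Context: Concept hierarchies: fix positive integers $\ell_{max},n,k$. A universal set $D$ of concepts is partitioned into disjoint sets $D_0,\dots,D_{\ell_{max}}$ with $|D_0|=n$; $level(c)=\ell$ for $c\in D_\ell$. A concept hierarchy $\mathcal C$ consists of $C\subseteq D$, with $C_\ell=C\cap D_\ell$, and for each $c\in C_\ell$ with $1\le\ell\le\ell_{max}$ a set $children(c)\subseteq C_{\ell-1}$, such that $|C_{\ell_{max}}|=k$, $|children(c)|=k$ for all such $c$, and $children(c)\cap children(c')=\emptyset$ for distinct $c,c'\in C_\ell$. Common network dynamics: neurons partitioned into layers $N_0,\dots,N_{\ell_{max}}$; threshold $\tau$; weights $w(u,v)\in\{0,1\}$ for $u\in N_{\ell-1}$, $v\in N_\ell$. Failed neurons never fire. A non-failed neuron $v\in N_\ell$, $\ell\ge1$, does not fire at time 0 and fires at time $t\ge1$ iff $\sum_{u\in N_{\ell-1}}w(u,v)x_u(t-1)\ge\tau$, where $x_u(s)\in\{0,1\}$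 indicates whether $u$ fires at time $s$. $\mathcal A_2$: no failures; each $c\in D_0$ has $rep(c)\in N_0$, each $c\in C$ with $level(c)\ge1$ has $rep(c)\in N_{level(c)}$, all distinct; $w(u,v)=1$ iff $v=rep(c)$, $u=rep(c')$ for a child $c'$ of $c$, else $0$; $\tau=r_1k$. Input $B\subseteq C_0$: the layer-0 neurons $rep(b)$, $b\in B$, fire at time 0, no other layer-0 neuron fires at time 0, and no layer-0 neuron fires at any other time. $\mathcal H$: each $c\in D_0$ has a set $reps(c)$ of $m$ neurons in $N_0$, each $c\in C$ with $level(c)\ge1$ a set $reps(c)$ of $m$ neurons in $N_{level(c)}$, all pairwise disjoint; $w(u,v)=1$ iff $v\in reps(c)$ and $u\in reps(c')$ for a child $c'$ of $c$, else $0$; $\tau=r_2km(1-\epsilon)$. A fixed set $F$ of neurons is failed, such that for every concept $c$ at least $m(1-\epsilon)$ neurons of $reps(c)$ are not in $F$. Input $B\subseteq C_0$: a layer-0 neuron fires at time 0 iff it is in $\bigcup_{b\in B}reps(b)\setminus F$, and no layer-0 neuron fires at any other time. *)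

theory Defs
  imports Complex_Main
begin

definition concept_hierarchy ::
  "nat \<Rightarrow> nat \<Rightarrow> nat \<Rightarrow> 'c set \<Rightarrow> ('c \<Rightarrow> nat) \<Rightarrow> 'c set \<Rightarrow> ('c \<Rightarrow> 'c set) \<Rightarrow> bool" where
  "concept_hierarchy lmax n k D level C children \<longleftrightarrow>
     (\<forall>c\<in>D. level c \<le> lmax) \<and>
     card {c\<in>D. level c = 0} = n \<and>
     C \<subseteq> D \<and>
     card {c\<in>C. level c = lmax} = k \<and>
     (\<forall>c\<in>C. 1 \<le> level c \<longrightarrow>
        children c \<subseteq> {c'\<in>C. level c' = level c - 1} \<and> card (children c) = k) \<and>
     (\<forall>c\<in>C. \<forall>c'\<in>C. 1 \<le> level c \<and> level c' = level c \<and> c \<noteq> c' \<longrightarrow>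
        children c \<inter> children c' = {})"

definition rep_concepts :: "'c set \<Rightarrow> ('c \<Rightarrow> nat) \<Rightarrow> 'c set \<Rightarrow> 'c set" where
  "rep_concepts D level C = {c\<in>D. level c = 0} \<union> C"

text \<open>Neurons N (finite), layer function lay, weights w, threshold tau, failed set F,
  and the set I of layer-0 neurons that fire at time 0 (input).\<close>

fun fires :: "'n set \<Rightarrow> ('n \<Rightarrow> nat) \<Rightarrow> ('n \<Rightarrow> 'n \<Rightarrow> real) \<Rightarrow> real \<Rightarrow> 'n set \<Rightarrow> 'n set
              \<Rightarrow> nat \<Rightarrow> 'n \<Rightarrow> bool" where
  "fires N lay w tau F I 0 v \<longleftrightarrow> v \<in> N \<and> v \<notin> F \<and> lay v = 0 \<and> v \<in> I"
| "fires N lay w tau F I (Suc t) v \<longleftrightarrow> v \<in> N \<and> v \<notin> F \<and> 1 \<le> lay v \<and>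
     tau \<le> (\<Sum>u\<in>{u\<in>N. lay u = lay v - 1}. w u v * (if fires N lay w tau F I t u then 1 else 0))"

definition network_layers :: "'n set \<Rightarrow> ('n \<Rightarrow> nat) \<Rightarrow> nat \<Rightarrow> bool" where
  "network_layers N lay lmax \<longleftrightarrow> finite N \<and> (\<forall>v\<in>N. lay v \<le> lmax)"

definition A2_layout :: "'n set \<Rightarrow> ('n \<Rightarrow> nat) \<Rightarrow> ('c \<Rightarrow> 'n) \<Rightarrow> 'c set \<Rightarrow> ('c \<Rightarrow> nat) \<Rightarrow> 'c set \<Rightarrow> bool" where
  "A2_layout N lay rep D level C \<longleftrightarrow>
     inj_on rep (rep_concepts D level C) \<and>
     (\<forall>c\<in>rep_concepts D level C. rep c \<in> N \<and> lay (rep c) = level c)"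

definition A2_weight :: "('c \<Rightarrow> 'n) \<Rightarrow> ('c \<Rightarrow> nat) \<Rightarrow> 'c set \<Rightarrow> ('c \<Rightarrow> 'c set) \<Rightarrow> 'n \<Rightarrow> 'n \<Rightarrow> real" where
  "A2_weight rep level C children u v =
     (if \<exists>c\<in>C. 1 \<le> level c \<and> v = rep c \<and> (\<exists>c'\<in>children c. u = rep c') then 1 else 0)"

definition H_layout :: "'m set \<Rightarrow> ('m \<Rightarrow> nat) \<Rightarrow> ('c \<Rightarrow> 'm set) \<Rightarrow> nat \<Rightarrow> 'c set \<Rightarrow> ('c \<Rightarrow> nat) \<Rightarrow> 'c set \<Rightarrow> bool" where
  "H_layout N lay reps m D level C \<longleftrightarrow>
     (\<forall>c\<in>rep_concepts D level C. reps c \<subseteq> N \<and> card (reps c) = m \<and> (\<forall>u\<in>reps c. lay u = level c)) \<and>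
     (\<forall>c\<in>rep_concepts D level C. \<forall>c'\<in>rep_concepts D level C. c \<noteq> c' \<longrightarrow> reps c \<inter> reps c' = {})"

definition H_weight :: "('c \<Rightarrow> 'm set) \<Rightarrow> ('c \<Rightarrow> nat) \<Rightarrow> 'c set \<Rightarrow> ('c \<Rightarrow> 'c set) \<Rightarrow> 'm \<Rightarrow> 'm \<Rightarrow> real" where
  "H_weight reps level C children u v =
     (if \<exists>c\<in>C. 1 \<le> level c \<and> v \<in> reps c \<and> (\<exists>c'\<in>children c. u \<in> reps c') then 1 else 0)"

end

theory Submission
  imports Defs
begin

theorem theorem7p3:
  fixes lmax n k m :: nat
    and D C :: "'c set" and level :: "'c \<Rightarrow> nat" and children :: "'c \<Rightarrow> 'c set"
    and r1 r2 \<epsilon> :: real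
    and N1 :: "'n set" and lay1 :: "'n \<Rightarrow> nat" and rep :: "'c \<Rightarrow> 'n"
    and N2 :: "'m set" and lay2 :: "'m \<Rightarrow> nat" and reps :: "'c \<Rightarrow> 'm set" and F :: "'m set"
  assumes "0 < lmax" "0 < n" "0 < k"
    and hier: "concept_hierarchy lmax n k D level C children"
    and "0 \<le> r1" "r1 \<le> 1" "0 \<le> r2" "r2 \<le> 1" "0 \<le> \<epsilon>" "\<epsilon> \<le> 1"
    and "r1 \<le> r2 * (1 - \<epsilon>)"
    and "0 < m"
    and A2_net: "network_layers N1 lay1 lmax" "A2_layout N1 lay1 rep D level C"
    and H_net: "network_layers N2 lay2 lmax" "H_layout N2 lay2 reps m D level C"
    and F_ok: "\<forall>c\<in>rep_concepts D level C. real (card (reps c - F)) \<ge> real m * (1 - \<epsilon>)"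
  shows "\<forall>B \<subseteq> {c\<in>C. level c = 0}. \<forall>c\<in>rep_concepts D level C.
           \<not> fires N1 lay1 (A2_weight rep level C children) (r1 * real k) {} (rep ` B)
               (level c) (rep c)
           \<longrightarrow> (\<forall>u\<in>reps c. \<not> fires N2 lay2 (H_weight reps level C children)
                  (r2 * real k * real m * (1 - \<epsilon>)) F (\<Union>b\<in>B. reps b) (level c) u)"
proof (intro allI impI ballI)
  fix B assume B: "B \<subseteq> {c\<in>C. level c = 0}"
  define R where "R = rep_concepts D level C"
  define fA where "fA = fires N1 lay1 (A2_weight rep level C children) (r1 * real k) {} (rep ` B)"
  define fH where "fH = fires N2 lay2 (H_weight reps level C children)
                  (r2 * real k * real m * (1 - \<epsilon>)) F (\<Union>b\<in>B. reps b)"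
  have eqA: "\<And>t v. fA (Suc t) v = (v\<in>N1 \<and> 1\<le>lay1 v \<and> r1*real k \<le> (\<Sum>u\<in>{u\<in>N1. lay1 u = lay1 v - 1}. A2_weight rep level C children u v * (if fA t u then 1 else 0)))"
    unfolding fA_def by simp
  have eqH: "\<And>t v. fH (Suc t) v = (v\<in>N2 \<and> v \<notin> F \<and> 1\<le>lay2 v \<and> r2 * real k * real m * (1 - \<epsilon>) \<le> (\<Sum>u\<in>{u\<in>N2. lay2 u = lay2 v - 1}. H_weight reps level C children u v * (if fH t u then 1 else 0)))"
    unfolding fH_def by simp
  have R_def': "R = {c\<in>D. level c = 0} \<union> C" unfolding R_def rep_concepts_def by simp
  have inj: "inj_on rep R" and repN: "\<And>c. c \<in> R \<Longrightarrow> rep c \<in> N1 \<and> lay1 (rep c) = level c"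
    using A2_net(2) unfolding A2_layout_def R_def by auto
  have fin1: "finite N1" "finite N2" using A2_net(1) H_net(1) by (auto simp: network_layers_def)
  have repsN: "\<And>c. c \<in> R \<Longrightarrow> reps c \<subseteq> N2 \<and> card (reps c) = m \<and> (\<forall>u\<in>reps c. lay2 u = level c)"
    and disj: "\<And>c c'. c \<in> R \<Longrightarrow> c' \<in> R \<Longrightarrow> c \<noteq> c' \<Longrightarrow> reps c \<inter> reps c' = {}"
    using H_net(2) unfolding H_layout_def R_def by auto
  have ch: "\<And>c. c \<in> C \<Longrightarrow> 1 \<le> level c \<Longrightarrow>
        children c \<subseteq> {c'\<in>C. level c' = level c - 1} \<and> card (children c) = k"
    using hier unfolding concept_hierarchy_def by auto
  have main: "\<forall>c\<in>R. level c = t \<longrightarrow> \<not> fA t (rep c) \<longrightarrow> (\<forall>u\<in>reps c. \<not> fH t u)" for t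
  proof (induction t)
    case 0
    show ?case
    proof (intro ballI impI)
      fix c u assume c: "c \<in> R" "level c = 0" "\<not> fA 0 (rep c)" and u: "u \<in> reps c"
      have "rep c \<notin> rep ` B" using c repN[OF c(1)] unfolding fA_def by simp
      hence "c \<notin> B" by auto
      show "\<not> fH 0 u"
      proof
        assume "fH 0 u"
        then obtain b where b: "b \<in> B" "u \<in> reps b" unfolding fH_def by auto
        have "b \<in> R" using b B R_def' by auto
        with disj[OF c(1) this] b u \<open>c \<notin> B\<close> show False by auto
      qed
    qed
  next
    case (Suc t)
    show ?case
    proof (intro ballI impI)
      fix c u assume c: "c \<in> R" "level c = Suc t" "\<not> fA (Suc t) (rep c)" and u: "u \<in> reps c"
      have cC: "c \<in> C" using c R_def' by auto
      have chc: "children c \<subseteq> {c'\<in>C. level c' = t}" "card (children c) = k"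
        using ch[OF cC] c by auto
      have finch: "finite (children c)" using chc(2) \<open>0 < k\<close> card_ge_0_finite by blast
      define S where "S = {c'\<in>children c. fA t (rep c')}"
      have SR: "S \<subseteq> R" using chc R_def' S_def by auto
      have finS: "finite S" using finch S_def by auto
      define L1 where "L1 = {v\<in>N1. lay1 v = t}"
      have h1: "lay1 (rep c) - 1 = t" using repN[OF c(1)] c(2) by simp
      have h2: "\<not> r1 * real k \<le> (\<Sum>u\<in>{u\<in>N1. lay1 u = lay1 (rep c) - 1}. A2_weight rep level C children u (rep c) * (if fA t u then 1 else 0))"
        using c(3) eqA[of t "rep c"] repN[OF c(1)] c(2) by simp
      have sumA: "(\<Sum>v\<in>L1. A2_weight rep level C children v (rep c) * (if fA t v then 1 else 0))
                  < r1 * real k"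
        using h2 unfolding h1 L1_def by linarith
      have "real (card S) = real (card (rep ` S))"
        using card_image[OF inj_on_subset[OF inj SR]] by simp
      also have "\<dots> = (\<Sum>v\<in>rep ` S. A2_weight rep level C children v (rep c) * (if fA t v then 1 else 0))"
      proof -
        have "\<And>v. v \<in> rep ` S \<Longrightarrow> A2_weight rep level C children v (rep c) * (if fA t v then 1 else 0) = 1"
          using cC c(2) unfolding A2_weight_def S_def by auto
        thus ?thesis by simp
      qed
      also have "\<dots> \<le> (\<Sum>v\<in>L1. A2_weight rep level C children v (rep c) * (if fA t v then 1 else 0))"
      proof (rule sum_mono2)
        show "finite L1" using fin1 L1_def by auto
        show "rep ` S \<subseteq> L1" using SR repN chc S_def L1_def by auto
      qed (auto simp: A2_weight_def)
      finally have cardS: "real (card S) < r1 * real k" using sumA by linarith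
      show "\<not> fH (Suc t) u"
      proof
        assume fu: "fH (Suc t) u"
        have uN: "lay2 u = Suc t" using repsN[OF c(1)] u c(2) by auto
        define L2 where "L2 = {v\<in>N2. lay2 v = t}"
        define U where "U = (\<Union>c'\<in>S. reps c')"
        have thr: "r2 * real k * real m * (1 - \<epsilon>) \<le>
             (\<Sum>v\<in>L2. H_weight reps level C children v u * (if fH t v then 1 else 0))"
        proof -
          have "r2 * real k * real m * (1 - \<epsilon>) \<le> (\<Sum>v\<in>{v\<in>N2. lay2 v = lay2 u - 1}. H_weight reps level C children v u * (if fH t v then 1 else 0))"
            using fu eqH[of t u] by blast
          thus ?thesis unfolding L2_def using uN by simp
        qed
        also have "\<dots> \<le> (\<Sum>v\<in>L2. if v \<in> U then 1 else 0)"
        proof (rule sum_mono)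
          fix v assume v: "v \<in> L2"
          show "H_weight reps level C children v u * (if fH t v then 1 else 0) \<le> (if v \<in> U then 1 else 0)"
          proof (cases "H_weight reps level C children v u * (if fH t v then 1 else 0) = 0")
            case False
            hence fv: "fH t v" and "H_weight reps level C children v u \<noteq> 0" by (auto split: if_splits)
            then obtain c'' c' where c'': "c'' \<in> C" "u \<in> reps c''" "c' \<in> children c''" "v \<in> reps c'"
              unfolding H_weight_def by (auto split: if_splits)
            have "c'' = c" using disj[OF c(1), of c''] c'' u R_def' by auto
            hence c'ch: "c' \<in> children c" using c'' by simp
            hence "c' \<in> R" "level c' = t" using chc R_def' by auto
            hence "fA t (rep c')" using Suc.IH fv c''(4) by blast
            hence "v \<in> U" using c'ch c''(4) unfolding U_def S_def by auto
            thus ?thesis by (auto simp: H_weight_def)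
          qed auto
        qed
        also have "\<dots> \<le> real (card U)"
        proof -
          have finL2: "finite L2" using fin1 unfolding L2_def by simp
          have "U \<subseteq> N2" unfolding U_def using repsN SR by fastforce
          hence finU: "finite U" using fin1(2) finite_subset by auto
          have "(\<Sum>v\<in>L2. if v \<in> U then 1 else 0) = (\<Sum>v\<in>{v\<in>L2. v \<in> U}. (1::real))"
            using sum.inter_filter[OF finL2, of "\<lambda>_. (1::real)" "\<lambda>v. v \<in> U"] by simp
          also have "\<dots> = real (card {v\<in>L2. v \<in> U})" by simp
          also have "\<dots> \<le> real (card U)"
            using card_mono[OF finU, of "{v\<in>L2. v \<in> U}"] by auto
          finally show ?thesis .
        qed
        also have "\<dots> \<le> real (\<Sum>c'\<in>S. card (reps c'))"
          unfolding U_def using card_UN_le[OF finS, of reps] by linarith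
        also have "\<dots> = real (card S) * real m"
        proof -
          have "(\<Sum>c'\<in>S. card (reps c')) = (\<Sum>c'\<in>S. m)"
            using repsN SR by (intro sum.cong) auto
          thus ?thesis by simp
        qed
        also have "\<dots> < r1 * real k * real m"
          using cardS \<open>0 < m\<close> by (simp add: mult_strict_right_mono)
        also have "\<dots> \<le> r2 * (1 - \<epsilon>) * real k * real m"
          using \<open>r1 \<le> r2 * (1 - \<epsilon>)\<close> by (simp add: mult_right_mono)
        finally show False by (simp add: algebra_simps)
      qed
    qed
  qed
  fix c u assume "c \<in> rep_concepts D level C"
    "\<not> fires N1 lay1 (A2_weight rep level C children) (r1 * real k) {} (rep ` B) (level c) (rep c)"
    "u \<in> reps c"
  thus "\<not> fires N2 lay2 (H_weight reps level C children)
                  (r2 * real k * real m * (1 - \<epsilon>)) F (\<Union>b\<in>B. reps b) (level c) u"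
    using main[of "level c"] unfolding R_def fA_def fH_def by blast
qed

end
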